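(* Assume the Nested Logit model without outside option described in the context satisfies Assumptions 1 and 2, and let $S \in \mathcal{S}$. Then for every $i \in S$: (I) if $N(i) \subseteq S$, then $\mathsf{BF}(i,S) \le \mathsf{BF}(k,S)$ for all $k \in S$ (in particular $\mathsf{BF}(i,S)$ takes the same value for all $i \in S$ with $N(i) \subseteq S$); (II) if $N(i) \not\subseteq S$, then for every $j \in S \setminus \{i\}$ we have $N(i) = N(j)$ if and only if $\mathsf{BF}(i,S) = \mathsf{BF}(j,S)$. Consequently, with $\mathsf{minBF}(S) = \arg\min_{k \in S} \mathsf{BF}(k,S)$ (the set of items of $S$ attaining the minimum boost factor): (a) if $N(i) \subseteq S$ for some $i \in S$, then $\mathsf{minBF}(S) = \bigcup_{N \in \mathcal{N} : N \subseteq S} N$; otherwise $\mathsf{minBF}(S) \subsetneq N$ for a single nest $N \in \mathcal{N}$ not fully contained in $S$; (b) if $i,j \in S$ and $\mathsf{BF}(i,S) = \mathsf{BF}(j,S) > \min_{k \in S} \mathsf{BF}(k,S)$, then $N(i) = N(j)$; (c) if $i,j \in S$ and $\mathsf{BF}(i,S) \neq \mathsf{BF}(j,S)$, then $N(i) \neq N(j)$.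
   Context: Items: $[n]=\{1,\dots,n\}$ with $n\ge 2$. Experiment design: fix an integer base $b \ge 2$, let $L = \lceil \log_b n \rceil$, fix an injective map $\sigma: [n] \to \{0,\dots,b-1\}^L$ with coordinates $\sigma_\ell(i)$, let $S_{\ell,-d} = \{i \in [n] : \sigma_\ell(i) \neq d\}$ for $\ell \in \{1,\dots,L\}$, $d \in \{0,\dots,b-1\}$, and $\mathcal{S} = \{S_{\ell,-d}\}_{\ell,d}$; the control assortment $[n]$ is also offered. Nested Logit model without outside option: $\mathcal{N}$ is a partition of $[n]$ into nests, $N(i)$ the nest containing $i$; weights $v_i > 0$; parameters $\lambda_N \in [0,1]$, with an extra weight $v_N>0$ when $\lambda_N=0$. $v_N(S) = (\sum_{i \in N \cap S} v_i)^{\lambda_N}$ if $\lambda_N \in (0,1]$, $v_N(S) = v_N \mathbf{1}(N \cap S \neq \emptyset)$ if $\lambda_N = 0$. For $i \in S$, $\phi(i,S) = \frac{v_{N(i)}(S)}{\sum_{N \in \mathcal{N}} v_N(S)} \cdot \frac{v_i}{\sum_{j \in N(i) \cap S} v_j}$ (no outside option, so $\sum_{i\in S}\phi(i,S)=1$). Boost factor: $\mathsf{BF}(i,S) = \phi(i,S)/\phi(i,[n])$ for $S \in \mathcal{S}$, $i \in S$. Multiplier: $\mathsf{Mult}(N,S) = \left(\frac{\sum_{j \in N} v_j}{\sum_{j \in N \cap S} v_j}\right)^{1-\lambda_N}$. Assumption 1: $\lambda_N = 1$ iff $|N| = 1$. Assumption 2: for every $S \in \mathcal{S}$ and distinct nests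 $N \neq N'$ with $\emptyset \neq N \cap S \neq N$ and $\emptyset \neq N' \cap S \neq N'$, $\mathsf{Mult}(N,S) \neq \mathsf{Mult}(N',S)$. *)

theory Defs
  imports Complex_Main "HOL-Library.FuncSet" "HOL-Library.Disjoint_Sets"
begin

definition num_digits :: "nat \<Rightarrow> nat \<Rightarrow> nat" where
  "num_digits b n = nat \<lceil>log (real b) (real n)\<rceil>"

text \<open>sigma i is an extensional function {1..L} -> {0..<b}; coordinate l is sigma i l.
  The design family consists of the sets S_{l,-d} = {i. sigma_l(i) ~= d}.\<close>
definition design_sets :: "nat \<Rightarrow> nat \<Rightarrow> nat \<Rightarrow> (nat \<Rightarrow> nat \<Rightarrow> nat) \<Rightarrow> nat set set" where
  "design_sets n b L \<sigma> =
     {{i \<in> {1..n}. \<sigma> i l \<noteq> d} | l d. l \<in> {1..L} \<and> d \<in> {0..<b}}"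

definition nest_of :: "nat set set \<Rightarrow> nat \<Rightarrow> nat set" where
  "nest_of Ns i = (THE N. N \<in> Ns \<and> i \<in> N)"

definition nest_val :: "(nat \<Rightarrow> real) \<Rightarrow> (nat set \<Rightarrow> real) \<Rightarrow> (nat set \<Rightarrow> real)
    \<Rightarrow> nat set \<Rightarrow> nat set \<Rightarrow> real" where
  "nest_val v lam vN N S =
     (if lam N = 0 then (if N \<inter> S \<noteq> {} then vN N else 0)
      else (\<Sum>j\<in>N \<inter> S. v j) powr lam N)"

definition nl_prob :: "nat set set \<Rightarrow> (nat \<Rightarrow> real) \<Rightarrow> (nat set \<Rightarrow> real) \<Rightarrow> (nat set \<Rightarrow> real)
    \<Rightarrow> nat \<Rightarrow> nat set \<Rightarrow> real" where
  "nl_prob Ns v lam vN i S =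
     nest_val v lam vN (nest_of Ns i) S / (\<Sum>N\<in>Ns. nest_val v lam vN N S)
     * (v i / (\<Sum>j\<in>nest_of Ns i \<inter> S. v j))"

definition boost :: "nat \<Rightarrow> nat set set \<Rightarrow> (nat \<Rightarrow> real) \<Rightarrow> (nat set \<Rightarrow> real) \<Rightarrow> (nat set \<Rightarrow> real)
    \<Rightarrow> nat \<Rightarrow> nat set \<Rightarrow> real" where
  "boost n Ns v lam vN i S = nl_prob Ns v lam vN i S / nl_prob Ns v lam vN i {1..n}"

definition mult :: "(nat \<Rightarrow> real) \<Rightarrow> (nat set \<Rightarrow> real) \<Rightarrow> nat set \<Rightarrow> nat set \<Rightarrow> real" where
  "mult v lam N S = ((\<Sum>j\<in>N. v j) / (\<Sum>j\<in>N \<inter> S. v j)) powr (1 - lam N)"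

definition minBF :: "nat \<Rightarrow> nat set set \<Rightarrow> (nat \<Rightarrow> real) \<Rightarrow> (nat set \<Rightarrow> real) \<Rightarrow> (nat set \<Rightarrow> real)
    \<Rightarrow> nat set \<Rightarrow> nat set" where
  "minBF n Ns v lam vN S =
     {i \<in> S. \<forall>k\<in>S. boost n Ns v lam vN i S \<le> boost n Ns v lam vN k S}"

end

theory Submission
  imports Defs
begin

lemma key_alg:
  fixes a A l vn D1 D2 vi :: real
  assumes "a > 0" "A > 0" "0 \<le> l" "l \<le> 1" "l = 0 \<Longrightarrow> vn > 0" "D1 > 0" "D2 > 0" "vi > 0"
  shows "((if l = 0 then vn else a powr l) / D1 * (vi / a)) /
         ((if l = 0 then vn else A powr l) / D2 * (vi / A)) = D2 / D1 * (A / a) powr (1 - l)"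
proof (cases "l = 0")
  case True
  then show ?thesis using assms by (simp add: field_simps)
next
  case False
  have "(A / a) powr (1 - l) = (A/a) / ((A / a) powr l)"
    using assms by (simp add: powr_diff)
  also have "\<dots> = (A/a) / (A powr l / a powr l)" using assms by (simp add: powr_divide)
  finally show ?thesis using False assms by (simp add: field_simps)
qed


lemma nest_of_eq:
  assumes "partition_on U Ns" "N \<in> Ns" "i \<in> N"
  shows "nest_of Ns i = N"
  unfolding nest_of_def
proof (rule the_equality)
  show "N \<in> Ns \<and> i \<in> N" using assms by simp
next
  fix N' assume h: "N' \<in> Ns \<and> i \<in> N'"
  show "N' = N"
  proof (rule ccontr)
    assume "N' \<noteq> N"
    moreover have "disjoint Ns" using assms(1) unfolding partition_on_def by simp
    ultimately have "N' \<inter> N = {}" using h assms(2) disjointD by metis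
    thus False using h assms(3) by blast
  qed
qed

lemma nest_of_props:
  assumes "partition_on U Ns" "i \<in> U"
  shows "nest_of Ns i \<in> Ns \<and> i \<in> nest_of Ns i"
proof -
  have "\<Union>Ns = U" using assms(1) unfolding partition_on_def by simp
  then obtain N where N: "N \<in> Ns" "i \<in> N" using assms(2) by blast
  thus ?thesis using nest_of_eq[OF assms(1) N] by simp
qed

lemma mult_props:
  fixes N S :: "nat set"
  assumes fin: "finite N" and vp: "\<forall>j\<in>N. v j > 0" and ne: "N \<inter> S \<noteq> {}"
    and l01: "0 \<le> lam N" "lam N \<le> 1" and A1: "lam N = 1 \<longleftrightarrow> card N = 1"
  shows "mult v lam N S \<ge> 1 \<and> (mult v lam N S = 1 \<longleftrightarrow> N \<subseteq> S)"
proof -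
  let ?a = "\<Sum>j\<in>N \<inter> S. v j" and ?A = "\<Sum>j\<in>N. v j"
  have apos: "?a > 0" using fin ne vp by (intro sum_pos) auto
  have e: "N - N \<inter> S = N - S" by blast
  have split: "?A = (\<Sum>j\<in>N - S. v j) + ?a"
    using sum.subset_diff[of "N \<inter> S" N v] fin e by simp
  have nn: "(\<Sum>j\<in>N - S. v j) \<ge> 0" using vp by (intro sum_nonneg) auto
  have r1: "?A / ?a \<ge> 1" using split apos nn by simp
  show ?thesis
  proof (cases "N \<subseteq> S")
    case True
    hence "N \<inter> S = N" by auto
    thus ?thesis using apos True unfolding mult_def by simp
  next
    case False
    have "(\<Sum>j\<in>N - S. v j) > 0" using False fin vp by (intro sum_pos) auto
    hence rg: "?A / ?a > 1" using split apos by simp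
    have "lam N \<noteq> 1"
    proof
      assume "lam N = 1"
      then obtain x where "N = {x}" using A1 card_1_singletonE by metis
      thus False using ne False by auto
    qed
    hence "1 - lam N > 0" using l01 by simp
    hence "(?A / ?a) powr (1 - lam N) > 1" using rg gr_one_powr by blast
    thus ?thesis using False unfolding mult_def by simp
  qed
qed


lemma design_nonempty:
  fixes n b :: nat and \<sigma> :: "nat \<Rightarrow> nat \<Rightarrow> nat"
  assumes n2: "n \<ge> 2" and b2: "b \<ge> 2"
    and sigma: "\<sigma> \<in> {1..n} \<rightarrow> ({1..num_digits b n} \<rightarrow>\<^sub>E {0..<b})"
    and sigma_inj: "inj_on \<sigma> {1..n}"
    and S: "S \<in> design_sets n b (num_digits b n) \<sigma>"
  shows "S \<noteq> {}"
proof
  assume Se: "S = {}"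
  define L where "L = num_digits b n"
  obtain l d where ld: "S = {i \<in> {1..n}. \<sigma> i l \<noteq> d}" "l \<in> {1..L}" "d \<in> {0..<b}"
    using S unfolding design_sets_def L_def by blast
  have cst: "\<And>i. i \<in> {1..n} \<Longrightarrow> \<sigma> i l = d" using Se ld(1) by blast
  define K where "K = {1..L} - {l}"
  define g where "g i = restrict (\<sigma> i) K" for i
  have sig: "\<And>i. i \<in> {1..n} \<Longrightarrow> \<sigma> i \<in> {1..L} \<rightarrow>\<^sub>E {0..<b}"
    using sigma unfolding L_def by blast
  have inj: "inj_on g {1..n}"
  proof (rule inj_onI)
    fix i j assume i: "i \<in> {1..n}" and j: "j \<in> {1..n}" and gij: "g i = g j"
    have "\<sigma> i = \<sigma> j"
    proof
      fix m
      show "\<sigma> i m = \<sigma> j m"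
      proof (cases "m \<in> {1..L}")
        case True
        show ?thesis
        proof (cases "m = l")
          case True
          thus ?thesis using cst i j by simp
        next
          case False
          hence "m \<in> K" using \<open>m \<in> {1..L}\<close> unfolding K_def by blast
          thus ?thesis using fun_cong[OF gij, of m] unfolding g_def by simp
        qed
      next
        case False
        have "\<sigma> i m = undefined" using PiE_arb[OF sig[OF i] False] .
        moreover have "\<sigma> j m = undefined" using PiE_arb[OF sig[OF j] False] .
        ultimately show ?thesis by simp
      qed
    qed
    thus "i = j" by (rule inj_onD[OF sigma_inj _ i j])
  qed
  have img: "g ` {1..n} \<subseteq> K \<rightarrow>\<^sub>E {0..<b}"
  proof
    fix x assume "x \<in> g ` {1..n}"
    then obtain i where i: "i \<in> {1..n}" "x = g i" by blast
    show "x \<in> K \<rightarrow>\<^sub>E {0..<b}" using sig[OF i(1)] i(2) unfolding g_def K_def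
      by (auto simp: PiE_iff)
  qed
  have finK: "finite K" unfolding K_def by simp
  have cK: "card K = L - 1" unfolding K_def using ld(2) by simp
  have "card {1..n} \<le> card (K \<rightarrow>\<^sub>E {0..<b})"
  proof -
    have "finite (K \<rightarrow>\<^sub>E {0..<b})" using finK by (intro finite_PiE) auto
    thus ?thesis using card_inj_on_le[OF inj img] by simp
  qed
  also have "\<dots> = b ^ (L - 1)" using card_PiE[OF finK, of "\<lambda>_. {0..<b}"] cK by simp
  finally have le: "n \<le> b ^ (L - 1)" by simp
  have L1: "L \<ge> 1" using ld(2) by simp
  have lgpos: "log (real b) (real n) > 0" using n2 b2 by simp
  have "real_of_int \<lceil>log (real b) (real n)\<rceil> < log (real b) (real n) + 1"
    by linarith
  moreover have "real L = real_of_int \<lceil>log (real b) (real n)\<rceil>"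
    unfolding L_def num_digits_def using lgpos by simp
  ultimately have "real (L - 1) < log (real b) (real n)" using L1 by (simp add: of_nat_diff)
  hence "real b powr real (L - 1) < real n"
  proof -
    have "1 < real b" "0 < real n" using n2 b2 by auto
    thus ?thesis using less_log_iff[of "real b" "real n" "real (L - 1)"] \<open>real (L - 1) < log (real b) (real n)\<close> by blast
  qed
  hence "real (b ^ (L - 1)) < real n" using b2 by (simp add: powr_realpow)
  thus False using le by linarith
qed

theorem proposition4p7:
  fixes n b :: nat
    and \<sigma> :: "nat \<Rightarrow> nat \<Rightarrow> nat"
    and Ns :: "nat set set"
    and v :: "nat \<Rightarrow> real"
    and lam vN :: "nat set \<Rightarrow> real"
    and S :: "nat set"
  assumes n2: "n \<ge> 2" and b2: "b \<ge> 2"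
    and sigma: "\<sigma> \<in> {1..n} \<rightarrow> ({1..num_digits b n} \<rightarrow>\<^sub>E {0..<b})"
    and sigma_inj: "inj_on \<sigma> {1..n}"
    and part: "partition_on {1..n} Ns"
    and vpos: "\<forall>i\<in>{1..n}. v i > 0"
    and lam_range: "\<forall>N\<in>Ns. 0 \<le> lam N \<and> lam N \<le> 1"
    and vN_pos: "\<forall>N\<in>Ns. lam N = 0 \<longrightarrow> vN N > 0"
    and A1: "\<forall>N\<in>Ns. lam N = 1 \<longleftrightarrow> card N = 1"
    and A2: "\<forall>T\<in>design_sets n b (num_digits b n) \<sigma>. \<forall>N\<in>Ns. \<forall>N'\<in>Ns.
               N \<noteq> N' \<and> N \<inter> T \<noteq> {} \<and> N \<inter> T \<noteq> N \<and> N' \<inter> T \<noteq> {} \<and> N' \<inter> T \<noteq> N'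
               \<longrightarrow> mult v lam N T \<noteq> mult v lam N' T"
    and S: "S \<in> design_sets n b (num_digits b n) \<sigma>"
  shows
    "(\<forall>i\<in>S. nest_of Ns i \<subseteq> S \<longrightarrow>
        (\<forall>k\<in>S. boost n Ns v lam vN i S \<le> boost n Ns v lam vN k S))
     \<and> (\<forall>i\<in>S. \<not> nest_of Ns i \<subseteq> S \<longrightarrow>
        (\<forall>j\<in>S - {i}. nest_of Ns i = nest_of Ns j \<longleftrightarrow>
                        boost n Ns v lam vN i S = boost n Ns v lam vN j S))
     \<and> ((\<exists>i\<in>S. nest_of Ns i \<subseteq> S) \<longrightarrow> minBF n Ns v lam vN S = \<Union>{N\<in>Ns. N \<subseteq> S})
     \<and> (\<not>(\<exists>i\<in>S. nest_of Ns i \<subseteq> S) \<longrightarrow>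
        (\<exists>!N. N \<in> Ns \<and> \<not> N \<subseteq> S \<and> minBF n Ns v lam vN S \<subset> N))
     \<and> (\<forall>i\<in>S. \<forall>j\<in>S. boost n Ns v lam vN i S = boost n Ns v lam vN j S
          \<and> boost n Ns v lam vN j S > Min ((\<lambda>k. boost n Ns v lam vN k S) ` S)
          \<longrightarrow> nest_of Ns i = nest_of Ns j)
     \<and> (\<forall>i\<in>S. \<forall>j\<in>S. boost n Ns v lam vN i S \<noteq> boost n Ns v lam vN j S
          \<longrightarrow> nest_of Ns i \<noteq> nest_of Ns j)"
proof -
  let ?U = "{1..n}"
  have finU: "finite ?U" by simp
  have finNs: "finite Ns" using finite_elements[OF finU part] .
  have NsU: "\<And>N. N \<in> Ns \<Longrightarrow> N \<subseteq> ?U" using partition_onD1[OF part] by blast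
  have finN: "\<And>N. N \<in> Ns \<Longrightarrow> finite N" using NsU finite_subset finU by blast
  have SU: "S \<subseteq> ?U" using S unfolding design_sets_def by blast
  have Sne: "S \<noteq> {}" using design_nonempty[OF n2 b2 sigma sigma_inj S] .
  have finS: "finite S" using SU finite_subset finU by blast
  define NN where "NN k = nest_of Ns k" for k
  have NNp: "\<And>k. k \<in> ?U \<Longrightarrow> NN k \<in> Ns \<and> k \<in> NN k" unfolding NN_def using nest_of_props[OF part] by blast
  have NNeq: "\<And>N k. N \<in> Ns \<Longrightarrow> k \<in> N \<Longrightarrow> NN k = N" unfolding NN_def using nest_of_eq[OF part] by blast
  define D where "D T = (\<Sum>N\<in>Ns. nest_val v lam vN N T)" for T
  have nv_nonneg: "\<And>N T. N \<in> Ns \<Longrightarrow> nest_val v lam vN N T \<ge> 0"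
    unfolding nest_val_def using vN_pos by auto
  have nv_pos: "\<And>N T. N \<in> Ns \<Longrightarrow> N \<inter> T \<noteq> {} \<Longrightarrow> nest_val v lam vN N T > 0"
  proof -
    fix N T assume N: "N \<in> Ns" and ne: "N \<inter> T \<noteq> {}"
    have "(\<Sum>j\<in>N \<inter> T. v j) > 0" using ne finN[OF N] NsU[OF N] vpos by (intro sum_pos) auto
    thus "nest_val v lam vN N T > 0" unfolding nest_val_def using vN_pos N ne by auto
  qed
  have Dpos: "\<And>T. T \<subseteq> ?U \<Longrightarrow> T \<noteq> {} \<Longrightarrow> D T > 0"
  proof -
    fix T assume TU: "T \<subseteq> ?U" and Tne: "T \<noteq> {}"
    then obtain k where k: "k \<in> T" by blast
    hence kU: "k \<in> ?U" using TU by blast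
    have "nest_val v lam vN (NN k) T > 0" using nv_pos NNp[OF kU] k by blast
    thus "D T > 0" unfolding D_def using NNp[OF kU] finNs nv_nonneg
      by (intro sum_pos2[of Ns "NN k"]) auto
  qed
  define C where "C = D ?U / D S"
  have Cpos: "C > 0" unfolding C_def using Dpos[OF SU Sne] Dpos[of ?U] n2 by simp
  define BF where "BF k = boost n Ns v lam vN k S" for k
  define M where "M k = mult v lam (NN k) S" for k
  have bf: "\<And>k. k \<in> S \<Longrightarrow> BF k = C * M k"
  proof -
    fix k assume kS: "k \<in> S"
    hence kU: "k \<in> ?U" using SU by blast
    define N where "N = NN k"
    have N: "N \<in> Ns" "k \<in> N" using NNp[OF kU] N_def by auto
    have NU: "N \<inter> ?U = N" using NsU[OF N(1)] by blast
    have neS: "N \<inter> S \<noteq> {}" using N kS by blast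
    have neU: "N \<inter> ?U \<noteq> {}" using N kU by blast
    have a: "(\<Sum>j\<in>N \<inter> S. v j) > 0" using neS finN[OF N(1)] NsU[OF N(1)] vpos by (intro sum_pos) auto
    have A: "(\<Sum>j\<in>N. v j) > 0" using N finN[OF N(1)] NsU[OF N(1)] vpos by (intro sum_pos) auto
    have nvS: "nest_val v lam vN N S = (if lam N = 0 then vN N else (\<Sum>j\<in>N \<inter> S. v j) powr lam N)"
      unfolding nest_val_def using neS by simp
    have nvU: "nest_val v lam vN N ?U = (if lam N = 0 then vN N else (\<Sum>j\<in>N. v j) powr lam N)"
      unfolding nest_val_def using neU NU by simp
    have "BF k = ((if lam N = 0 then vN N else (\<Sum>j\<in>N \<inter> S. v j) powr lam N) / D S * (v k / (\<Sum>j\<in>N \<inter> S. v j))) /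
         ((if lam N = 0 then vN N else (\<Sum>j\<in>N. v j) powr lam N) / D ?U * (v k / (\<Sum>j\<in>N. v j)))"
      unfolding BF_def boost_def nl_prob_def D_def using nvS nvU NU N_def NN_def by simp
    also have "\<dots> = D ?U / D S * ((\<Sum>j\<in>N. v j) / (\<Sum>j\<in>N \<inter> S. v j)) powr (1 - lam N)"
    proof (rule key_alg[OF a A])
      show "0 \<le> lam N" "lam N \<le> 1" using lam_range N by auto
      show "lam N = 0 \<Longrightarrow> 0 < vN N" using vN_pos N by auto
      show "0 < D S" using Dpos[OF SU Sne] .
      show "0 < D ?U" using Dpos[of ?U] n2 by simp
      show "0 < v k" using vpos kU by auto
    qed
    finally show "BF k = C * M k" unfolding C_def M_def mult_def N_def by simp
  qed
  have Mp: "\<And>k. k \<in> S \<Longrightarrow> M k \<ge> 1 \<and> (M k = 1 \<longleftrightarrow> NN k \<subseteq> S)"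
  proof -
    fix k assume kS: "k \<in> S"
    hence kU: "k \<in> ?U" using SU by blast
    have N: "NN k \<in> Ns" "k \<in> NN k" using NNp[OF kU] by auto
    show "M k \<ge> 1 \<and> (M k = 1 \<longleftrightarrow> NN k \<subseteq> S)" unfolding M_def
      using mult_props[OF finN[OF N(1)], of v S lam] NsU[OF N(1)] vpos N kS lam_range A1 by blast
  qed
  have same: "\<And>i j. i \<in> S \<Longrightarrow> j \<in> S \<Longrightarrow> BF i = BF j \<Longrightarrow> \<not> NN i \<subseteq> S \<Longrightarrow> NN i = NN j"
  proof (rule ccontr)
    fix i j assume iS: "i \<in> S" and jS: "j \<in> S" and eq: "BF i = BF j" and ni: "\<not> NN i \<subseteq> S"
      and neq: "NN i \<noteq> NN j"
    have Meq: "M i = M j" using eq bf iS jS Cpos by simp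
    have Mi: "M i > 1" using Mp[OF iS] ni by auto
    hence nj: "\<not> NN j \<subseteq> S" using Mp[OF jS] Meq by auto
    have iU: "i \<in> ?U" and jU: "j \<in> ?U" using iS jS SU by auto
    have "mult v lam (NN i) S \<noteq> mult v lam (NN j) S"
      using A2 S NNp[OF iU] NNp[OF jU] neq ni nj iS jS by blast
    thus False using Meq unfolding M_def by simp
  qed
  have P1: "\<And>i k. i \<in> S \<Longrightarrow> NN i \<subseteq> S \<Longrightarrow> k \<in> S \<Longrightarrow> BF i \<le> BF k"
  proof -
    fix i k assume iS: "i \<in> S" and ii: "NN i \<subseteq> S" and kS: "k \<in> S"
    have "M i = 1" "M k \<ge> 1" using Mp[OF iS] Mp[OF kS] ii by auto
    thus "BF i \<le> BF k" using bf[OF iS] bf[OF kS] Cpos by simp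
  qed
  have P6: "\<And>i j. i \<in> S \<Longrightarrow> j \<in> S \<Longrightarrow> NN i = NN j \<Longrightarrow> BF i = BF j"
    using bf M_def by simp
  have minBF_eq: "minBF n Ns v lam vN S = {k \<in> S. \<forall>k'\<in>S. BF k \<le> BF k'}"
    unfolding minBF_def BF_def by simp
  have part1: "\<forall>i\<in>S. NN i \<subseteq> S \<longrightarrow> (\<forall>k\<in>S. BF i \<le> BF k)" using P1 by blast
  have part2: "\<forall>i\<in>S. \<not> NN i \<subseteq> S \<longrightarrow> (\<forall>j\<in>S - {i}. NN i = NN j \<longleftrightarrow> BF i = BF j)"
    using same P6 by blast
  have part3: "(\<exists>i\<in>S. NN i \<subseteq> S) \<longrightarrow> minBF n Ns v lam vN S = \<Union>{N\<in>Ns. N \<subseteq> S}"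
  proof
    assume "\<exists>i\<in>S. NN i \<subseteq> S"
    then obtain i where iS: "i \<in> S" and ii: "NN i \<subseteq> S" by blast
    have BFi: "BF i = C" using bf[OF iS] Mp[OF iS] ii by simp
    show "minBF n Ns v lam vN S = \<Union>{N\<in>Ns. N \<subseteq> S}"
    proof
      show "minBF n Ns v lam vN S \<subseteq> \<Union>{N\<in>Ns. N \<subseteq> S}"
      proof
        fix k assume "k \<in> minBF n Ns v lam vN S"
        hence kS: "k \<in> S" and le: "BF k \<le> BF i" using minBF_eq iS by auto
        hence "M k \<le> 1" using bf[OF kS] BFi Cpos by simp
        moreover have "M k \<ge> 1" using Mp[OF kS] by blast
        ultimately have "M k = 1" by linarith
        hence "NN k \<subseteq> S" using Mp[OF kS] by blast
        moreover have "NN k \<in> Ns \<and> k \<in> NN k" using NNp kS SU by blast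
        ultimately show "k \<in> \<Union>{N\<in>Ns. N \<subseteq> S}" by blast
      qed
    next
      show "\<Union>{N\<in>Ns. N \<subseteq> S} \<subseteq> minBF n Ns v lam vN S"
      proof
        fix k assume "k \<in> \<Union>{N\<in>Ns. N \<subseteq> S}"
        then obtain N where N: "N \<in> Ns" "N \<subseteq> S" "k \<in> N" by blast
        hence kS: "k \<in> S" and kk: "NN k \<subseteq> S" using NNeq[OF N(1) N(3)] by auto
        thus "k \<in> minBF n Ns v lam vN S" unfolding minBF_eq using P1[OF kS kk] by simp
      qed
    qed
  qed
  obtain i0 where i0S: "i0 \<in> S" and i0min: "BF i0 = Min (BF ` S)"
  proof -
    have "Min (BF ` S) \<in> BF ` S" using finS Sne by (intro Min_in) auto
    then obtain k where k: "k \<in> S" "Min (BF ` S) = BF k" by (rule imageE) simp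
    show ?thesis using that[OF k(1)] k(2) by simp
  qed
  have i0le: "\<And>k. k \<in> S \<Longrightarrow> BF i0 \<le> BF k"
  proof -
    fix k assume "k \<in> S"
    hence "Min (BF ` S) \<le> BF k" using finS by (intro Min_le) auto
    thus "BF i0 \<le> BF k" using i0min by simp
  qed
  have part4: "\<not>(\<exists>i\<in>S. NN i \<subseteq> S) \<longrightarrow>
        (\<exists>!N. N \<in> Ns \<and> \<not> N \<subseteq> S \<and> minBF n Ns v lam vN S \<subset> N)"
  proof
    assume none: "\<not>(\<exists>i\<in>S. NN i \<subseteq> S)"
    have i0U: "i0 \<in> ?U" using i0S SU by blast
    have N0: "NN i0 \<in> Ns" "i0 \<in> NN i0" using NNp[OF i0U] by auto
    have n0: "\<not> NN i0 \<subseteq> S" using none i0S by blast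
    have meq: "minBF n Ns v lam vN S = NN i0 \<inter> S"
    proof
      show "minBF n Ns v lam vN S \<subseteq> NN i0 \<inter> S"
      proof
        fix k assume "k \<in> minBF n Ns v lam vN S"
        hence kS: "k \<in> S" and "BF k \<le> BF i0" unfolding minBF_eq using i0S by auto
        hence "BF i0 = BF k" using i0le by (simp add: order_antisym)
        hence "NN i0 = NN k" using same[OF i0S kS] n0 by simp
        moreover have "k \<in> NN k" using NNp[of k] kS SU by blast
        ultimately show "k \<in> NN i0 \<inter> S" using kS by simp
      qed
    next
      show "NN i0 \<inter> S \<subseteq> minBF n Ns v lam vN S"
      proof
        fix k assume k: "k \<in> NN i0 \<inter> S"
        hence kS: "k \<in> S" and "NN k = NN i0" using NNeq[OF N0(1)] by auto
        hence "BF k = BF i0" using P6[OF kS i0S] by simp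
        thus "k \<in> minBF n Ns v lam vN S" unfolding minBF_eq using i0le kS by simp
      qed
    qed
    show "\<exists>!N. N \<in> Ns \<and> \<not> N \<subseteq> S \<and> minBF n Ns v lam vN S \<subset> N"
    proof (rule ex1I[of _ "NN i0"])
      show "NN i0 \<in> Ns \<and> \<not> NN i0 \<subseteq> S \<and> minBF n Ns v lam vN S \<subset> NN i0"
        unfolding meq using N0 n0 by auto
    next
      fix N assume hN: "N \<in> Ns \<and> \<not> N \<subseteq> S \<and> minBF n Ns v lam vN S \<subset> N"
      have "i0 \<in> minBF n Ns v lam vN S" unfolding meq using N0 i0S by simp
      hence "i0 \<in> N" using hN by auto
      hence "NN i0 = N" using NNeq hN by simp
      thus "N = NN i0" by simp
    qed
  qed
  have part5: "\<forall>i\<in>S. \<forall>j\<in>S. BF i = BF j \<and> BF j > Min (BF ` S) \<longrightarrow> NN i = NN j"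
  proof (intro ballI impI)
    fix i j assume iS: "i \<in> S" and jS: "j \<in> S" and h: "BF i = BF j \<and> BF j > Min (BF ` S)"
    show "NN i = NN j"
    proof (cases "NN i \<subseteq> S")
      case True
      hence "BF i \<le> BF i0" using P1[OF iS _ i0S] by simp
      hence "BF i \<le> Min (BF ` S)" using i0min by simp
      thus ?thesis using h by simp
    next
      case False
      thus ?thesis using same[OF iS jS] h by simp
    qed
  qed
  have part6: "\<forall>i\<in>S. \<forall>j\<in>S. BF i \<noteq> BF j \<longrightarrow> NN i \<noteq> NN j"
  proof (intro ballI impI notI)
    fix i j assume a: "i \<in> S" "j \<in> S" "BF i \<noteq> BF j" "NN i = NN j"
    thus False using P6[OF a(1) a(2) a(4)] by simp
  qed
  have BFf: "(\<lambda>k. boost n Ns v lam vN k S) = BF" unfolding BF_def by simp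
  show ?thesis unfolding BFf BF_def[symmetric] NN_def[symmetric]
    by (rule conjI[OF part1 conjI[OF part2 conjI[OF part3 conjI[OF part4 conjI[OF part5 part6]]]]])
qed

end
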